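(* Let $\Sigma$ be a two-letter alphabet and let $w\in\Sigma^*$ be a binary word. If every element of $\mathtt{BR}(w)$ is rich, then $2\le l(w)\le 8$.
   Context: For a word $w=w_1\cdots w_n$, $|w|=n$, $w^R=w_n\cdots w_1$; $w$ is a palindrome if $w=w^R$; a factor of $w$ is a word $u$ with $w=puq$. A word $w$ is rich if the number of distinct nonempty palindromic factors of $w$ equals $|w|$. The block reversal of a nonempty word $w$ is $\mathtt{BR}(w)=\{B_tB_{t-1}\cdots B_1 : w=B_1\cdots B_t,\ t\ge1,\ \text{each } B_i \text{ nonempty}\}$. Every nonempty word has a unique run-length encoding $w=c_1^{n_1}c_2^{n_2}\cdots c_k^{n_k}$ with letters $c_i\neq c_{i+1}$ and $n_i\ge1$; $(n_1,\dots,n_k)$ is the run sequence and $l(w)=k$ is its length. A binary word is a word in which exactly two distinct letters occur. *)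

theory Defs
  imports Main
begin

definition factor :: "'a list \<Rightarrow> 'a list \<Rightarrow> bool" where
  "factor u w \<longleftrightarrow> (\<exists>p q. w = p @ u @ q)"

definition palindrome :: "'a list \<Rightarrow> bool" where
  "palindrome w \<longleftrightarrow> w = rev w"

definition pal_factors :: "'a list \<Rightarrow> 'a list set" where
  "pal_factors w = {u. u \<noteq> [] \<and> palindrome u \<and> factor u w}"

definition rich :: "'a list \<Rightarrow> bool" where
  "rich w \<longleftrightarrow> card (pal_factors w) = length w"

definition block_reversal :: "'a list \<Rightarrow> 'a list set" where
  "block_reversal w = {concat (rev bs) | bs. bs \<noteq> [] \<and> (\<forall>b\<in>set bs. b \<noteq> []) \<and> concat bs = w}"

definition run_length :: "'a list \<Rightarrow> nat" where
  "run_length w = length (remdups_adj w)"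

definition binary_word :: "'a list \<Rightarrow> bool" where
  "binary_word w \<longleftrightarrow> card (set w) = 2"

end

theory Submission
  imports Defs
begin


lemma factor_Nil: "factor u [] \<longleftrightarrow> u = []"
  unfolding factor_def by auto

lemma pal_factors_Nil: "pal_factors [] = {}"
  unfolding pal_factors_def by (auto simp: factor_Nil)

lemma finite_pal_factors: "finite (pal_factors w)"
proof -
  have "pal_factors w \<subseteq> {xs. set xs \<subseteq> set w \<and> length xs \<le> length w}"
    unfolding pal_factors_def factor_def by auto
  moreover have "finite {xs. set xs \<subseteq> set w \<and> length xs \<le> length w}"
    by (rule finite_lists_length_le) simp
  ultimately show ?thesis by (rule finite_subset)
qed

lemma pal_factors_snoc_sub:
  "\<exists>L. pal_factors (w @ [a]) \<subseteq> insert L (pal_factors w)"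
proof -
  define S where "S = {s. s \<noteq> [] \<and> palindrome s \<and> (\<exists>p. w @ [a] = p @ s)}"
  have finS: "finite S"
  proof -
    have "S \<subseteq> pal_factors (w @ [a])" unfolding S_def pal_factors_def factor_def by force
    thus ?thesis using finite_pal_factors finite_subset by blast
  qed
  have "[a] \<in> S" unfolding S_def palindrome_def by auto
  hence neS: "S \<noteq> {}" by auto
  obtain L where LS: "L \<in> S" and Lmax: "\<And>s. s \<in> S \<Longrightarrow> length s \<le> length L"
  proof -
    have "Max (length ` S) \<in> length ` S" using finS neS by simp
    then obtain L where "L \<in> S" "length L = Max (length ` S)" by auto
    moreover have "\<And>s. s \<in> S \<Longrightarrow> length s \<le> Max (length ` S)" using finS by simp
    ultimately show ?thesis using that by auto
  qed
  have "pal_factors (w @ [a]) \<subseteq> insert L (pal_factors w)"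
  proof
    fix u assume u: "u \<in> pal_factors (w @ [a])"
    then obtain p q where pq: "w @ [a] = p @ u @ q" and une: "u \<noteq> []" and pu: "palindrome u"
      unfolding pal_factors_def factor_def by auto
    show "u \<in> insert L (pal_factors w)"
    proof (cases "q = []")
      case False
      have "last (w @ [a]) = last q" using pq False by simp
      hence "q = butlast q @ [a]" using False by simp
      then obtain q' where "q = q' @ [a]" by blast
      hence "w = p @ u @ q'" using pq by simp
      thus ?thesis using une pu unfolding pal_factors_def factor_def by auto
    next
      case True
      hence uS: "u \<in> S" using pq une pu unfolding S_def by auto
      show ?thesis
      proof (cases "u = L")
        case True thus ?thesis by simp
      next
        case False
        have lu: "length u \<le> length L" using Lmax uS by blast
        obtain p2 where p2: "w @ [a] = p2 @ L" using LS unfolding S_def by auto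
        have pu2: "w @ [a] = p @ u" using pq True by simp
        have "length (p @ u) = length (p2 @ L)" using p2 pu2 by simp
        hence "length p + length u = length p2 + length L" by simp
        hence "length p2 \<le> length p" using lu by linarith
        have uL: "u = drop (length p - length p2) L"
        proof -
          have "u = drop (length p) (w @ [a])" using pu2 by simp
          also have "\<dots> = drop (length p - length p2) (drop (length p2) (w @ [a]))"
            using \<open>length p2 \<le> length p\<close> by (simp only: drop_drop le_add_diff_inverse2)
          also have "drop (length p2) (w @ [a]) = L" using p2 by simp
          finally show ?thesis .
        qed
        define r where "r = take (length p - length p2) L"
        have Lru: "L = r @ u" unfolding r_def uL by simp
        have rne: "r \<noteq> []" using Lru False by auto
        have "L = rev L" using LS unfolding S_def palindrome_def by auto
        also have "\<dots> = rev u @ rev r" using Lru by simp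
        also have "rev u = u" using pu unfolding palindrome_def by simp
        finally have L2: "L = u @ rev r" .
        obtain r' where r': "rev r = r' @ [a]"
        proof -
          have eq: "w @ [a] = p2 @ u @ rev r" using p2 L2 by simp
          have "rev r \<noteq> []" using rne by simp
          hence "last (rev r) = last (p2 @ u @ rev r)" by simp
          also have "\<dots> = last (w @ [a])" using eq by simp
          finally have "last (rev r) = a" by simp
          hence "rev r = butlast (rev r) @ [a]" using \<open>rev r \<noteq> []\<close> append_butlast_last_id[of "rev r"] by simp
          thus ?thesis using that by blast
        qed
        have "w = p2 @ u @ r'" using p2 L2 r' by simp
        thus ?thesis using une pu unfolding pal_factors_def factor_def by auto
      qed
    qed
  qed
  thus ?thesis by blast
qed

lemma card_pal_snoc: "card (pal_factors (w @ [a])) \<le> Suc (card (pal_factors w))"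
proof -
  from pal_factors_snoc_sub[of w a] obtain L where L: "pal_factors (w @ [a]) \<subseteq> insert L (pal_factors w)"
    by (elim exE)
  have "card (pal_factors (w @ [a])) \<le> card (insert L (pal_factors w))"
    by (rule card_mono) (simp_all add: finite_pal_factors L)
  also have "\<dots> \<le> Suc (card (pal_factors w))" by (simp add: card_insert_le_m1 finite_pal_factors card_insert_if)
  finally show ?thesis .
qed

lemma pal_factors_rev: "pal_factors (rev w) = rev ` pal_factors w"
proof -
  have fr: "factor (rev u) (rev w) \<longleftrightarrow> factor u w" for u
    unfolding factor_def
    by (metis rev_append rev_rev_ident append.assoc)
  show ?thesis
    unfolding pal_factors_def palindrome_def
    apply (rule set_eqI)
    apply (simp add: image_iff)
    by (metis fr rev_rev_ident rev_is_Nil_conv)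
qed

lemma card_pal_rev: "card (pal_factors (rev w)) = card (pal_factors w)"
  by (simp add: pal_factors_rev card_image)

lemma card_pal_Cons: "card (pal_factors (a # w)) \<le> Suc (card (pal_factors w))"
proof -
  have "a # w = rev (rev w @ [a])" by simp
  hence "card (pal_factors (a # w)) = card (pal_factors (rev w @ [a]))"
    by (metis card_pal_rev)
  also have "\<dots> \<le> Suc (card (pal_factors (rev w)))" by (rule card_pal_snoc)
  finally show ?thesis by (simp add: card_pal_rev)
qed

lemma card_pal_app_right: "card (pal_factors (f @ q)) \<le> card (pal_factors f) + length q"
proof (induction q rule: rev_induct)
  case Nil thus ?case by simp
next
  case (snoc x xs)
  have "card (pal_factors (f @ xs @ [x])) \<le> Suc (card (pal_factors (f @ xs)))"
    using card_pal_snoc[of "f @ xs" x] by simp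
  thus ?case using snoc by simp
qed

lemma card_pal_app_left: "card (pal_factors (p @ f)) \<le> card (pal_factors f) + length p"
proof (induction p)
  case Nil thus ?case by simp
next
  case (Cons x xs)
  thus ?case using card_pal_Cons[of x "xs @ f"] by simp
qed

lemma card_pal_le: "card (pal_factors w) \<le> length w"
  using card_pal_app_right[of "[]" w] by (simp add: pal_factors_Nil)

lemma not_rich_factor:
  assumes "card (pal_factors f) < length f"
  shows "\<not> rich (p @ f @ q)"
proof -
  have "card (pal_factors (p @ f @ q)) \<le> card (pal_factors (f @ q)) + length p"
    by (rule card_pal_app_left)
  also have "\<dots> \<le> card (pal_factors f) + length q + length p"
    using card_pal_app_right[of f q] by simp
  finally show ?thesis using assms unfolding rich_def by simp
qed



definition cw :: "'a \<Rightarrow> 'a \<Rightarrow> nat \<Rightarrow> nat \<Rightarrow> 'a list" where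
  "cw c d x z = [c,c] @ replicate x d @ [c] @ replicate z d @ [c,c]"

lemma cw_length: "length (cw c d x z) = x + z + 5"
  unfolding cw_def by simp

lemma cw_nth:
  assumes "j < x + z + 5"
  shows "cw c d x z ! j = (if j = 0 \<or> j = 1 \<or> j = x + 2 \<or> j = x + z + 3 \<or> j = x + z + 4 then c else d)"
  using assms unfolding cw_def
  by (auto simp: nth_append nth_Cons' nth_replicate)

lemma cw_snoc: "cw c d x z = ([c,c] @ replicate x d @ [c] @ replicate z d @ [c]) @ [c]"
  unfolding cw_def by simp

lemma cw_not_rich_card:
  assumes cd: "c \<noteq> d" and xz: "x \<noteq> z" and x0: "0 < x" and z0: "0 < z"
  shows "card (pal_factors (cw c d x z)) < length (cw c d x z)"
proof -
  define g where "g = [c,c] @ replicate x d @ [c] @ replicate z d @ [c]"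
  define f where "f = cw c d x z"
  have fg: "f = g @ [c]" unfolding f_def g_def cw_def by simp
  have lf: "length f = x + z + 5" unfolding f_def by (rule cw_length)
  have fn: "\<And>j. j < x + z + 5 \<Longrightarrow> f ! j = (if j = 0 \<or> j = 1 \<or> j = x + 2 \<or> j = x + z + 3 \<or> j = x + z + 4 then c else d)"
    unfolding f_def by (rule cw_nth)
  have sub: "pal_factors f \<subseteq> pal_factors g"
  proof
    fix u assume "u \<in> pal_factors f"
    then obtain p q where pq: "f = p @ u @ q" and une: "u \<noteq> []" and pu: "palindrome u"
      unfolding pal_factors_def factor_def by auto
    show "u \<in> pal_factors g"
    proof (cases "q = []")
      case False
      have "last f = last q" using pq False by simp
      hence "q = butlast q @ [c]" using False fg by simp
      then obtain q' where "q = q' @ [c]" by blast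
      hence "g = p @ u @ q'" using pq fg by simp
      thus ?thesis using une pu unfolding pal_factors_def factor_def by auto
    next
      case True
      have fpu: "f = p @ u" using pq True by simp
      have ud: "u = drop (length p) f" using fpu by simp
      have lpu: "length p + length u = x + z + 5" using fpu lf by (metis length_append)
      show ?thesis
      proof (cases "length u \<le> 2")
        case True
        have "length p = x + z + 3 \<or> length p = x + z + 4" using True une lpu
          by (cases "length u") auto
        moreover have "drop (x + z + 3) f = [c,c]"
        proof -
          define l where "l = [c,c] @ replicate x d @ [c] @ replicate z d"
          have "f = l @ [c,c]" unfolding l_def f_def cw_def by simp
          moreover have "length l = x + z + 3" unfolding l_def by simp
          ultimately show ?thesis by simp
        qed
        moreover have "drop (x + z + 4) f = [c]"
        proof -
          define l where "l = [c,c] @ replicate x d @ [c] @ replicate z d @ [c]"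
          have "f = l @ [c]" unfolding l_def f_def cw_def by simp
          moreover have "length l = x + z + 4" unfolding l_def by simp
          ultimately show ?thesis by simp
        qed
        ultimately have "u = [c,c] \<or> u = [c]" using ud by auto
        moreover have "g = [c,c] @ (replicate x d @ [c] @ replicate z d @ [c])" unfolding g_def by simp
        moreover have "g = [c] @ (c # replicate x d @ [c] @ replicate z d @ [c])" unfolding g_def by simp
        ultimately have "factor u g" unfolding factor_def by (metis append_Nil)
        thus ?thesis using une pu unfolding pal_factors_def by auto
      next
        case False
        define i where "i = length p"
        define n where "n = length u"
        have n3: "3 \<le> n" using False n_def by simp
        have un: "\<And>k. k < n \<Longrightarrow> u ! k = f ! (i + k)" using ud i_def n_def lpu by simp
        have ur: "\<And>k. k < n \<Longrightarrow> u ! k = u ! (n - Suc k)"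
          using pu unfolding palindrome_def n_def by (metis rev_nth)
        have inn: "i + n = x + z + 5" using lpu i_def n_def by simp
        have e0: "f ! i = c"
        proof -
          have "u ! 0 = u ! (n - 1)" using ur[of 0] n3 by simp
          hence "f ! i = f ! (i + (n - 1))" using un[of 0] un[of "n-1"] n3 by simp
          also have "\<dots> = c" using fn[of "i + (n - 1)"] inn n3 by simp
          finally show ?thesis .
        qed
        have e1: "f ! (i + 1) = c"
        proof -
          have "u ! 1 = u ! (n - 2)" using ur[of 1] n3 by (simp add: numeral_2_eq_2)
          hence "f ! (i + 1) = f ! (i + (n - 2))" using un[of 1] un[of "n-2"] n3 by simp
          also have "\<dots> = c" using fn[of "i + (n - 2)"] inn n3 by simp
          finally show ?thesis .
        qed
        have e2: "f ! (i + 2) = d"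
        proof -
          have "u ! 2 = u ! (n - 3)" using ur[of 2] n3 by (simp add: numeral_3_eq_3 numeral_2_eq_2)
          hence "f ! (i + 2) = f ! (i + (n - 3))" using un[of 2] un[of "n-3"] n3 by simp
          also have "\<dots> = d" using fn[of "i + (n - 3)"] inn n3 z0 cd by auto
          finally show ?thesis .
        qed
        have "i = 0"
        proof (rule ccontr)
          assume "i \<noteq> 0"
          have A: "i = 0 \<or> i = 1 \<or> i = x + 2 \<or> i = x + z + 3 \<or> i = x + z + 4"
            using e0 fn[of i] inn n3 cd by (auto split: if_splits)
          have B: "i + 1 = 0 \<or> i + 1 = 1 \<or> i + 1 = x + 2 \<or> i + 1 = x + z + 3 \<or> i + 1 = x + z + 4"
            using e1 fn[of "i+1"] inn n3 cd by (auto split: if_splits)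
          show False using A B \<open>i \<noteq> 0\<close> inn n3 z0 x0 by auto
        qed
        hence "u = f" using ud i_def by simp
        hence pf: "f = rev f" using pu unfolding palindrome_def by simp
        have "f ! (x + 2) = rev f ! (x + 2)" using pf by simp
        also have "\<dots> = f ! (z + 2)" using lf by (simp add: rev_nth)
        finally have "f ! (x + 2) = f ! (z + 2)" .
        moreover have "f ! (x + 2) = c" using fn[of "x+2"] by simp
        moreover have "f ! (z + 2) = d" using fn[of "z+2"] xz x0 z0 by auto
        ultimately show ?thesis using cd by simp
      qed
    qed
  qed
  have "card (pal_factors f) \<le> card (pal_factors g)"
    by (rule card_mono[OF finite_pal_factors sub])
  also have "\<dots> \<le> length g" by (rule card_pal_le)
  also have "\<dots> < length f" using fg by simp
  finally show ?thesis unfolding f_def .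
qed

lemma not_rich_cw:
  assumes "c \<noteq> d" "x \<noteq> z" "0 < x" "0 < z"
  shows "\<not> rich (p @ cw c d x z @ q)"
  by (rule not_rich_factor[OF cw_not_rich_card[OF assms]])



lemma concat_filt: "concat (filter (\<lambda>b. b \<noteq> []) xs) = concat xs"
  by (induction xs) auto

lemma br_intro:
  assumes "concat bs = w" "w \<noteq> []"
  shows "concat (rev bs) \<in> block_reversal w"
proof -
  define bs' where "bs' = filter (\<lambda>b. b \<noteq> []) bs"
  have c1: "concat bs' = w" unfolding bs'_def using assms(1) by (simp add: concat_filt)
  have c2: "concat (rev bs') = concat (rev bs)" unfolding bs'_def rev_filter
    by (simp add: concat_filt)
  have "bs' \<noteq> []" using c1 assms(2) by auto
  moreover have "\<forall>b\<in>set bs'. b \<noteq> []" unfolding bs'_def by auto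
  ultimately have "concat (rev bs) = concat (rev bs') \<and> bs' \<noteq> [] \<and> (\<forall>b\<in>set bs'. b \<noteq> []) \<and> concat bs' = w"
    using c1 c2 by simp
  thus ?thesis unfolding block_reversal_def by blast
qed

lemma run_split:
  assumes "w \<noteq> []"
  shows "\<exists>n rest. 0 < n \<and> w = replicate n (hd w) @ rest \<and> (rest \<noteq> [] \<longrightarrow> hd rest \<noteq> hd w)
     \<and> remdups_adj w = hd w # remdups_adj rest"
  using assms
proof (induction w)
  case Nil thus ?case by simp
next
  case (Cons x w')
  show ?case
  proof (cases "w' = []")
    case True
    thus ?thesis by (intro exI[of _ 1] exI[of _ "[]"]) simp
  next
    case False
    then obtain y ys where w': "w' = y # ys" by (cases w') auto
    show ?thesis
    proof (cases "y = x")
      case False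
      thus ?thesis using w' by (intro exI[of _ 1] exI[of _ w']) simp
    next
      case True
      from Cons.IH[OF False] obtain n rest where
        h: "0 < n" "w' = replicate n (hd w') @ rest" "rest \<noteq> [] \<longrightarrow> hd rest \<noteq> hd w'"
           "remdups_adj w' = hd w' # remdups_adj rest" by blast
      have "hd w' = x" using w' True by simp
      moreover have "remdups_adj (x # w') = remdups_adj w'" using w' True by simp
      ultimately show ?thesis using h
        by (intro exI[of _ "Suc n"] exI[of _ rest]) simp
    qed
  qed
qed

lemma run_split2:
  assumes "Suc k \<le> length (remdups_adj w)"
  shows "\<exists>x n rest. 0 < n \<and> w = replicate n x @ rest \<and> (rest \<noteq> [] \<longrightarrow> hd rest \<noteq> x)
     \<and> k \<le> length (remdups_adj rest)"
proof -
  have "w \<noteq> []" using assms by auto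
  from run_split[OF this] obtain n rest where
    "0 < n" "w = replicate n (hd w) @ rest" "rest \<noteq> [] \<longrightarrow> hd rest \<noteq> hd w"
    "remdups_adj w = hd w # remdups_adj rest" by blast
  thus ?thesis using assms by (intro exI[of _ "hd w"] exI[of _ n] exI[of _ rest]) simp
qed

lemma hd_rep: "0 < n \<Longrightarrow> hd (replicate n x @ r) = x"
  by (cases n) auto

lemma nine_runs:
  assumes "9 \<le> length (remdups_adj w)"
  shows "\<exists>x1 x2 x3 x4 x5 x6 x7 x8 x9 n1 n2 n3 n4 n5 n6 n7 n8 n9 r.
     w = replicate n1 x1 @ replicate n2 x2 @ replicate n3 x3 @ replicate n4 x4 @ replicate n5 x5
       @ replicate n6 x6 @ replicate n7 x7 @ replicate n8 x8 @ replicate n9 x9 @ r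
     \<and> 0 < n1 \<and> 0 < n2 \<and> 0 < n3 \<and> 0 < n4 \<and> 0 < n5 \<and> 0 < n6 \<and> 0 < n7 \<and> 0 < n8 \<and> 0 < n9
     \<and> x1 \<noteq> x2 \<and> x2 \<noteq> x3 \<and> x3 \<noteq> x4 \<and> x4 \<noteq> x5 \<and> x5 \<noteq> x6 \<and> x6 \<noteq> x7 \<and> x7 \<noteq> x8 \<and> x8 \<noteq> x9"
proof -
  obtain x1 n1 r1 where a1: "0 < n1" "w = replicate n1 x1 @ r1" "r1 \<noteq> [] \<longrightarrow> hd r1 \<noteq> x1" "8 \<le> length (remdups_adj r1)"
    using run_split2[of 8 w] assms by auto
  obtain x2 n2 r2 where a2: "0 < n2" "r1 = replicate n2 x2 @ r2" "r2 \<noteq> [] \<longrightarrow> hd r2 \<noteq> x2" "7 \<le> length (remdups_adj r2)"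
    using run_split2[of 7 r1] a1 by auto
  obtain x3 n3 r3 where a3: "0 < n3" "r2 = replicate n3 x3 @ r3" "r3 \<noteq> [] \<longrightarrow> hd r3 \<noteq> x3" "6 \<le> length (remdups_adj r3)"
    using run_split2[of 6 r2] a2 by auto
  obtain x4 n4 r4 where a4: "0 < n4" "r3 = replicate n4 x4 @ r4" "r4 \<noteq> [] \<longrightarrow> hd r4 \<noteq> x4" "5 \<le> length (remdups_adj r4)"
    using run_split2[of 5 r3] a3 by auto
  obtain x5 n5 r5 where a5: "0 < n5" "r4 = replicate n5 x5 @ r5" "r5 \<noteq> [] \<longrightarrow> hd r5 \<noteq> x5" "4 \<le> length (remdups_adj r5)"
    using run_split2[of 4 r4] a4 by auto
  obtain x6 n6 r6 where a6: "0 < n6" "r5 = replicate n6 x6 @ r6" "r6 \<noteq> [] \<longrightarrow> hd r6 \<noteq> x6" "3 \<le> length (remdups_adj r6)"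
    using run_split2[of 3 r5] a5 by auto
  obtain x7 n7 r7 where a7: "0 < n7" "r6 = replicate n7 x7 @ r7" "r7 \<noteq> [] \<longrightarrow> hd r7 \<noteq> x7" "2 \<le> length (remdups_adj r7)"
    using run_split2[of 2 r6] a6 by auto
  obtain x8 n8 r8 where a8: "0 < n8" "r7 = replicate n8 x8 @ r8" "r8 \<noteq> [] \<longrightarrow> hd r8 \<noteq> x8" "1 \<le> length (remdups_adj r8)"
    using run_split2[of 1 r7] a7 by auto
  obtain x9 n9 r9 where a9: "0 < n9" "r8 = replicate n9 x9 @ r9"
    using run_split2[of 0 r8] a8 by auto
  have "x1 \<noteq> x2" using a1(3) a2(1,2) hd_rep[of n2 x2 r2] by auto
  moreover have "x2 \<noteq> x3" using a2(3) a3(1,2) hd_rep[of n3 x3 r3] by auto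
  moreover have "x3 \<noteq> x4" using a3(3) a4(1,2) hd_rep[of n4 x4 r4] by auto
  moreover have "x4 \<noteq> x5" using a4(3) a5(1,2) hd_rep[of n5 x5 r5] by auto
  moreover have "x5 \<noteq> x6" using a5(3) a6(1,2) hd_rep[of n6 x6 r6] by auto
  moreover have "x6 \<noteq> x7" using a6(3) a7(1,2) hd_rep[of n7 x7 r7] by auto
  moreover have "x7 \<noteq> x8" using a7(3) a8(1,2) hd_rep[of n8 x8 r8] by auto
  moreover have "x8 \<noteq> x9" using a8(3) a9(1,2) hd_rep[of n9 x9 r9] by auto
  moreover have "w = replicate n1 x1 @ replicate n2 x2 @ replicate n3 x3 @ replicate n4 x4 @ replicate n5 x5
       @ replicate n6 x6 @ replicate n7 x7 @ replicate n8 x8 @ replicate n9 x9 @ r9"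
    by (simp only: a1(2) a2(2) a3(2) a4(2) a5(2) a6(2) a7(2) a8(2) a9(2) append_assoc)
  ultimately show ?thesis using a1(1) a2(1) a3(1) a4(1) a5(1) a6(1) a7(1) a8(1) a9(1)
    apply -
    apply (intro exI conjI)
    apply assumption+
    done
qed



lemma br_not_rich:
  assumes "concat bs = w" "w \<noteq> []" "concat (rev bs) = X @ cw c d x z @ Y"
    "c \<noteq> d" "x \<noteq> z" "0 < x" "0 < z"
  shows "\<exists>u\<in>block_reversal w. \<not> rich u"
  using br_intro[OF assms(1,2)] not_rich_cw[OF assms(4-7), of X Y] assms(3) by metis

lemma main_constr:
  assumes cd: "c \<noteq> d" and pos: "0 < p1" "0 < p2" "0 < p3" "0 < p4" "0 < q1" "0 < q2" "0 < q3"
    and w: "w = P @ [c] @ replicate p1 d @ replicate q1 c @ replicate p2 d @ replicate q2 c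
              @ replicate p3 d @ replicate q3 c @ replicate p4 d @ [c] @ S"
  shows "\<exists>u\<in>block_reversal w. \<not> rich u"
proof -
  have wne: "w \<noteq> []" using w by simp
  obtain b where b: "q1 = Suc b" using pos(5) by (cases q1) auto
  obtain e where e: "q2 = Suc e" using pos(6) by (cases q2) auto
  show ?thesis
  proof (cases "2 \<le> q3")
    case True
    have "q3 = Suc (Suc (q3 - 2))" using True by simp
    then obtain a where a: "q3 = Suc (Suc a)" by blast
    show ?thesis
    proof (cases "p4 = p1")
      case False
      define bs where "bs = [P, [c], replicate p1 d @ replicate q1 c,
         replicate p2 d @ replicate q2 c @ replicate p3 d @ replicate q3 c @ replicate p4 d @ [c], S]"
      have h1: "concat bs = w" unfolding bs_def w by simp
      have h2: "concat (rev bs) = (S @ replicate p2 d @ replicate q2 c @ replicate p3 d @ replicate a c)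
          @ cw c d p4 p1 @ (replicate b c @ P)"
        unfolding bs_def cw_def a b by (simp add: replicate_app_Cons_same)
      show ?thesis by (rule br_not_rich[OF h1 wne h2 cd False]) (use pos in simp_all)
    next
      case True
      define bs where "bs = [P, [c], replicate p1 d @ replicate q1 c, replicate p2 d,
         replicate q2 c @ replicate p3 d @ replicate q3 c @ replicate p4 d @ [c], S]"
      have h1: "concat bs = w" unfolding bs_def w by simp
      have h2: "concat (rev bs) = (S @ replicate q2 c @ replicate p3 d @ replicate a c)
          @ cw c d p4 (p2 + p1) @ (replicate b c @ P)"
        unfolding bs_def cw_def a b by (simp add: replicate_app_Cons_same replicate_add)
      have h3: "p4 \<noteq> p2 + p1" using True pos by simp
      show ?thesis by (rule br_not_rich[OF h1 wne h2 cd h3]) (use pos in simp_all)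
    qed
  next
    case False
    hence q3: "q3 = 1" using pos(7) by simp
    show ?thesis
    proof (cases "p3 = p1 + p2")
      case False
      define bs where "bs = [P, [c], replicate p1 d @ replicate q1 c, replicate p2 d,
         replicate q2 c @ replicate p3 d @ replicate q3 c, replicate p4 d @ [c], S]"
      have h1: "concat bs = w" unfolding bs_def w by simp
      have h2: "concat (rev bs) = (S @ replicate p4 d @ replicate e c)
          @ cw c d p3 (p2 + p1) @ (replicate b c @ P)"
        unfolding bs_def cw_def q3 b e by (simp add: replicate_app_Cons_same replicate_add)
      have h3: "p3 \<noteq> p2 + p1" using False by simp
      show ?thesis by (rule br_not_rich[OF h1 wne h2 cd h3]) (use pos in simp_all)
    next
      case True
      define bs where "bs = [P, [c], replicate p1 d @ replicate q1 c, replicate p2 d,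
         replicate q2 c @ replicate p3 d @ replicate q3 c @ replicate p4 d, [c], S]"
      have h1: "concat bs = w" unfolding bs_def w by simp
      have h2: "concat (rev bs) = (S @ replicate e c)
          @ cw c d p3 (p4 + p2 + p1) @ (replicate b c @ P)"
        unfolding bs_def cw_def q3 b e by (simp add: replicate_app_Cons_same replicate_add)
      have h3: "p3 \<noteq> p4 + p2 + p1" using True pos by simp
      show ?thesis by (rule br_not_rich[OF h1 wne h2 cd h3]) (use pos in simp_all)
    qed
  qed
qed



theorem mainTheorem2:
  fixes w :: "'a list" and \<Sigma> :: "'a set"
  assumes "card \<Sigma> = 2"
    and "set w \<subseteq> \<Sigma>"
    and "binary_word w"
    and "\<forall>v\<in>block_reversal w. rich v"
  shows "2 \<le> run_length w \<and> run_length w \<le> 8"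
proof
  have cs: "card (set w) = 2" using assms(3) unfolding binary_word_def .
  have "card (set (remdups_adj w)) \<le> length (remdups_adj w)" by (rule card_length)
  thus "2 \<le> run_length w" using cs unfolding run_length_def by simp
next
  have cs: "card (set w) = 2" using assms(3) unfolding binary_word_def .
  show "run_length w \<le> 8"
  proof (rule ccontr)
    assume "\<not> run_length w \<le> 8"
    hence "9 \<le> length (remdups_adj w)" unfolding run_length_def by simp
    from nine_runs[OF this] obtain x1 x2 x3 x4 x5 x6 x7 x8 x9 n1 n2 n3 n4 n5 n6 n7 n8 n9 r where
      wd: "w = replicate n1 x1 @ replicate n2 x2 @ replicate n3 x3 @ replicate n4 x4 @ replicate n5 x5
       @ replicate n6 x6 @ replicate n7 x7 @ replicate n8 x8 @ replicate n9 x9 @ r"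
      and pos: "0 < n1" "0 < n2" "0 < n3" "0 < n4" "0 < n5" "0 < n6" "0 < n7" "0 < n8" "0 < n9"
      and ne: "x1 \<noteq> x2" "x2 \<noteq> x3" "x3 \<noteq> x4" "x4 \<noteq> x5" "x5 \<noteq> x6" "x6 \<noteq> x7" "x7 \<noteq> x8" "x8 \<noteq> x9"
      by blast
    have mem: "x1 \<in> set w" "x2 \<in> set w" "x3 \<in> set w" "x4 \<in> set w" "x5 \<in> set w"
      "x6 \<in> set w" "x7 \<in> set w" "x8 \<in> set w" "x9 \<in> set w"
      using wd pos by auto
    have sw: "set w = {x1, x2}"
    proof -
      have "{x1, x2} \<subseteq> set w" using mem by auto
      moreover have "card {x1, x2} = 2" using ne(1) by simp
      ultimately show ?thesis using cs by (metis card_subset_eq finite_set)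
    qed
    have e3: "x3 = x1" using mem(3) ne(2) sw by auto
    have e4: "x4 = x2" using mem(4) ne(3) sw e3 by auto
    have e5: "x5 = x1" using mem(5) ne(4) sw e4 by auto
    have e6: "x6 = x2" using mem(6) ne(5) sw e5 by auto
    have e7: "x7 = x1" using mem(7) ne(6) sw e6 by auto
    have e8: "x8 = x2" using mem(8) ne(7) sw e7 by auto
    have e9: "x9 = x1" using mem(9) ne(8) sw e8 by auto
    obtain m1 where m1: "n1 = Suc m1" using pos(1) by (cases n1) auto
    obtain m9 where m9: "n9 = Suc m9" using pos(9) by (cases n9) auto
    have "w = replicate m1 x1 @ [x1] @ replicate n2 x2 @ replicate n3 x1 @ replicate n4 x2 @ replicate n5 x1
       @ replicate n6 x2 @ replicate n7 x1 @ replicate n8 x2 @ [x1] @ (replicate m9 x1 @ r)"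
      unfolding wd e3 e4 e5 e6 e7 e8 e9 m1 m9 by (simp add: replicate_append_same[symmetric])
    from main_constr[OF ne(1) pos(2) pos(4) pos(6) pos(8) pos(3) pos(5) pos(7) this] obtain u where "u \<in> block_reversal w" "\<not> rich u" by blast
    thus False using assms(4) by blast
  qed
qed

end
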